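(* Let $f$ be a firm and let $\widehat{Ch}_f:[0,1]^W\to[0,1]^W$ be the function defined below. Then $\widehat{Ch}_f$ is continuous and satisfies the revealed preference property: for any $\mathbf x,\mathbf x'\in[0,1]^W$ with $\mathbf x'\le\mathbf x$, if $\widehat{Ch}_f(\mathbf x)\le\mathbf x'$ then $\widehat{Ch}_f(\mathbf x')=\widehat{Ch}_f(\mathbf x)$.
   Context: $W=\{w_1,\dots,w_n\}$ is a finite set, and firm $f$ has a strict, complete, transitive preference $\succ_f$ over $2^W$; subsets of $W$ are identified with their indicator vectors in $\{0,1\}^W$. Let $\mathbf u^1\succ_f\mathbf u^2\succ_f\cdots\succ_f\mathbf u^L\succ_f\mathbf 0$ be all sets $S$ with $S\succ_f\emptyset$, listed in preference order. For $\mathbf x\in[0,1]^W$ define recursively $t_0=0$, $\mathbf z^0=\mathbf x$, and for $k=1,\dots,L$: $t_k=\min\{1-\sum_{j=0}^{k-1}t_j,\ z^{k-1}_i : i\in\{1,\dots,n\},\ u^k_i\neq0\}$ and $\mathbf z^k=\mathbf z^{k-1}-t_k\mathbf u^k$. Then $\widehat{Ch}_f(\mathbf x)=\sum_{k=1}^L t_k\mathbf u^k$. Vector inequalities are componentwise. *)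

theory Defs
  imports "HOL-Analysis.Analysis"
begin

definition ind :: "'w::finite set \<Rightarrow> real^'w" where
  "ind S = (\<chi> i. if i \<in> S then 1 else 0)"

(* The acceptable sets u^1 \<succ> u^2 \<succ> ... \<succ> u^L (all S with S \<succ> {}), in preference order *)
definition pref_list :: "('w::finite set \<Rightarrow> 'w set \<Rightarrow> bool) \<Rightarrow> 'w set list" where
  "pref_list pref = (THE us. distinct us \<and> set us = {S. pref S {}} \<and> sorted_wrt pref us)"

(* Recursive computation: b = 1 - (t_0 + ... + t_{k-1}) is the remaining budget,
   z = z^{k-1}; t_k = min {b, z_i : u^k_i \<noteq> 0}; z^k = z^{k-1} - t_k u^k. *)
fun ch_aux :: "'w::finite set list \<Rightarrow> real \<Rightarrow> real^'w \<Rightarrow> real^'w" where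
  "ch_aux [] b z = 0"
| "ch_aux (u # us) b z =
     (let t = Min (insert b ((\<lambda>i. z $ i) ` u))
      in t *\<^sub>R ind u + ch_aux us (b - t) (z - t *\<^sub>R ind u))"

definition ch_hat :: "('w::finite set \<Rightarrow> 'w set \<Rightarrow> bool) \<Rightarrow> real^'w \<Rightarrow> real^'w" where
  "ch_hat pref x = ch_aux (pref_list pref) 1 x"

definition unit_cube :: "(real^'w::finite) set" where
  "unit_cube = {x. \<forall>i. 0 \<le> x $ i \<and> x $ i \<le> 1}"

end

theory Submission
  imports Defs
begin

lemma cont_min_set:
  fixes g :: "'a::topological_space \<Rightarrow> real^'w::finite"
  assumes "continuous_on S f" "continuous_on S g" "finite u"
  shows "continuous_on S (\<lambda>x. Min (insert (f x) ((\<lambda>i. g x $ i) ` u)))"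
  using assms(3)
proof (induction u rule: finite_induct)
  case empty
  then show ?case using assms(1) by simp
next
  case (insert a u)
  have eq: "(\<lambda>x. Min (insert (f x) ((\<lambda>i. g x $ i) ` insert a u)))
        = (\<lambda>x. min (g x $ a) (Min (insert (f x) ((\<lambda>i. g x $ i) ` u))))"
  proof
    fix x
    have "insert (f x) ((\<lambda>i. g x $ i) ` insert a u) = insert (g x $ a) (insert (f x) ((\<lambda>i. g x $ i) ` u))"
      by auto
    then show "Min (insert (f x) ((\<lambda>i. g x $ i) ` insert a u)) = min (g x $ a) (Min (insert (f x) ((\<lambda>i. g x $ i) ` u)))"
      using insert.hyps(1) by (simp add: Min_insert)
  qed
  have ca: "continuous_on S (\<lambda>x. g x $ a)"
    using assms(2) by (intro continuous_intros)
  show ?case unfolding eq using ca insert.IH by (intro continuous_on_min)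
qed

lemma cont_aux:
  fixes g :: "'a::topological_space \<Rightarrow> real^'w::finite"
  assumes "continuous_on S f" "continuous_on S g"
  shows "continuous_on S (\<lambda>x. ch_aux us (f x) (g x))"
  using assms
proof (induction us arbitrary: f g)
  case Nil
  then show ?case by simp
next
  case (Cons u us)
  define t where "t = (\<lambda>x. Min (insert (f x) ((\<lambda>i. g x $ i) ` u)))"
  have ct: "continuous_on S t" unfolding t_def using Cons.prems by (intro cont_min_set) auto
  have c1: "continuous_on S (\<lambda>x. t x *\<^sub>R ind u)" using ct by (intro continuous_intros)
  have c2: "continuous_on S (\<lambda>x. ch_aux us (f x - t x) (g x - t x *\<^sub>R ind u))"
    using Cons.prems ct c1 by (intro Cons.IH continuous_intros) auto
  have eq: "(\<lambda>x. ch_aux (u # us) (f x) (g x)) = (\<lambda>x. t x *\<^sub>R ind u + ch_aux us (f x - t x) (g x - t x *\<^sub>R ind u))"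
    by (simp add: t_def Let_def)
  show ?case by (subst eq) (rule continuous_on_add[OF c1 c2])
qed

lemma ind_nth: "ind u $ i = (if i \<in> u then 1 else 0)"
  by (simp add: ind_def)

lemma t_facts:
  fixes z :: "real^'w::finite" and u :: "'w set"
  assumes "0 \<le> b" "0 \<le> z"
  defines "t \<equiv> Min (insert b ((\<lambda>i. z $ i) ` u))"
  shows "0 \<le> t" "t \<le> b" "\<And>i. i \<in> u \<Longrightarrow> t \<le> z $ i" "0 \<le> z - t *\<^sub>R ind u"
proof -
  have fin: "finite (insert b ((\<lambda>i. z $ i) ` u))" by simp
  show "0 \<le> t" unfolding t_def using assms(1,2) fin
    by (subst Min_ge_iff) (auto simp: less_eq_vec_def)
  show "t \<le> b" unfolding t_def using fin by (intro Min_le) auto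
  show ti: "\<And>i. i \<in> u \<Longrightarrow> t \<le> z $ i" unfolding t_def using fin by (intro Min_le) auto
  show "0 \<le> z - t *\<^sub>R ind u" using ti assms(2) by (auto simp: less_eq_vec_def ind_nth)
qed

lemma aux_nonneg:
  fixes z :: "real^'w::finite"
  assumes "0 \<le> b" "0 \<le> z"
  shows "0 \<le> ch_aux us b z"
  using assms
proof (induction us arbitrary: b z)
  case Nil
  then show ?case by simp
next
  case (Cons u us)
  define t where "t = Min (insert b ((\<lambda>i. z $ i) ` u))"
  note tf = t_facts[OF Cons.prems, where u=u, folded t_def]
  have "0 \<le> ch_aux us (b - t) (z - t *\<^sub>R ind u)"
    using tf by (intro Cons.IH) auto
  moreover have "0 \<le> t *\<^sub>R ind u" using tf(1) by (auto simp: less_eq_vec_def ind_nth)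
  ultimately show ?case by (simp add: t_def[symmetric] Let_def)
qed

lemma aux_rp:
  fixes z z' :: "real^'w::finite"
  assumes "0 \<le> b" "0 \<le> z" "z' \<le> z" "ch_aux us b z \<le> z'"
  shows "ch_aux us b z' = ch_aux us b z"
  using assms
proof (induction us arbitrary: b z z')
  case Nil
  then show ?case by simp
next
  case (Cons u us)
  define t where "t = Min (insert b ((\<lambda>i. z $ i) ` u))"
  define t' where "t' = Min (insert b ((\<lambda>i. z' $ i) ` u))"
  note tf = t_facts[OF Cons.prems(1,2), where u=u, folded t_def]
  define r where "r = ch_aux us (b - t) (z - t *\<^sub>R ind u)"
  have rnn: "0 \<le> r" unfolding r_def using tf by (intro aux_nonneg) auto
  have ch: "ch_aux (u # us) b z = t *\<^sub>R ind u + r" by (simp add: t_def r_def Let_def)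
  have le: "t *\<^sub>R ind u + r \<le> z'" using Cons.prems(4) ch by simp
  have tz': "t \<le> z' $ i" if "i \<in> u" for i
  proof -
    have "(t *\<^sub>R ind u + r) $ i \<le> z' $ i" using le by (simp add: less_eq_vec_def)
    then show ?thesis using that rnn by (simp add: ind_nth less_eq_vec_def) (smt (verit) rnn less_eq_vec_def zero_index)
  qed
  have fin: "finite (insert b ((\<lambda>i. z' $ i) ` u))" by simp
  have "t \<le> t'" unfolding t'_def using fin tf(2) tz' by (subst Min_ge_iff) auto
  moreover have "t' \<le> t"
  proof -
    have "t' \<le> x" if "x \<in> insert b ((\<lambda>i. z $ i) ` u)" for x
    proof -
      from that consider "x = b" | i where "i \<in> u" "x = z $ i" by auto
      then show ?thesis
      proof cases
        case 1 then show ?thesis unfolding t'_def using fin by (intro Min_le) auto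
      next
        case 2
        have "t' \<le> z' $ i" unfolding t'_def using fin 2 by (intro Min_le) auto
        also have "\<dots> \<le> z $ i" using Cons.prems(3) by (simp add: less_eq_vec_def)
        finally show ?thesis using 2 by simp
      qed
    qed
    then show ?thesis unfolding t_def by (subst Min_ge_iff) auto
  qed
  ultimately have tt: "t' = t" by simp
  have "ch_aux us (b - t) (z' - t *\<^sub>R ind u) = r"
    unfolding r_def
  proof (rule Cons.IH)
    show "0 \<le> b - t" using tf by simp
    show "0 \<le> z - t *\<^sub>R ind u" using tf by simp
    show "z' - t *\<^sub>R ind u \<le> z - t *\<^sub>R ind u" using Cons.prems(3) by (simp add: less_eq_vec_def)
    show "ch_aux us (b - t) (z - t *\<^sub>R ind u) \<le> z' - t *\<^sub>R ind u"
      using le unfolding r_def by (simp add: less_eq_vec_def algebra_simps)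
  qed
  then show ?case using ch tt by (simp add: t'_def[symmetric] Let_def)
qed

theorem lemma1:
  fixes pref :: "'w::finite set \<Rightarrow> 'w set \<Rightarrow> bool"
  assumes irrefl: "\<And>S. \<not> pref S S"
    and trans: "\<And>S T U. pref S T \<Longrightarrow> pref T U \<Longrightarrow> pref S U"
    and total: "\<And>S T. S \<noteq> T \<Longrightarrow> pref S T \<or> pref T S"
  shows "continuous_on unit_cube (ch_hat pref)
         \<and> (\<forall>x \<in> unit_cube. \<forall>x' \<in> unit_cube.
              x' \<le> x \<longrightarrow> ch_hat pref x \<le> x' \<longrightarrow> ch_hat pref x' = ch_hat pref x)"
proof
  have "continuous_on unit_cube (\<lambda>x. ch_aux (pref_list pref) 1 x)"
    by (rule cont_aux) (auto intro: continuous_intros)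
  then show "continuous_on unit_cube (ch_hat pref)" unfolding ch_hat_def .
  show "\<forall>x \<in> unit_cube. \<forall>x' \<in> unit_cube.
              x' \<le> x \<longrightarrow> ch_hat pref x \<le> x' \<longrightarrow> ch_hat pref x' = ch_hat pref x"
    unfolding ch_hat_def
    by (auto intro!: aux_rp simp: unit_cube_def less_eq_vec_def)
qed

end
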